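(* Assume that $q$ is $\mathcal{C}$-decomposable for a partition $\mathcal{C}=\{C_1,\ldots,C_r\}$ of $C$, with associated function $\tilde c$. Then, for each $k\in\{0,\ldots,n\}$, the restriction of $\tilde c$ to $\mathcal{T}_k$ is a probability distribution on $\mathcal{T}_k$. More precisely, $\tilde c(\mathbf{a})=\Pr(E_{k,\mathbf{a}})$ for every $\mathbf{a}\in\mathcal{T}_k$.
   Context: Consider components $C=[n]$ with random lifetimes $T_1,\ldots,T_n$ whose joint distribution has no ties. The relative quality function is $q(A)=\Pr(\max_{i\notin A}T_i<\min_{i\in A}T_i)$, with $q(\varnothing)=q([n])=1$. Thus $q(A)$ is the probability that the $|A|$ longest-lived components are exactly those in $A$, and $\sum_{|A|=k}q(A)=1$ for each $k$. For a partition $\mathcal{C}=\{C_1,\ldots,C_r\}$ of $C$ into nonempty blocks, write $n_j=|C_j|$, $A_j=A\cap C_j$, and $q^{C_j}(A)=\Pr(\max_{i\in C_j\setminus A}T_i<\min_{i\in A}T_i)$ for $A\subseteq C_j$. The function $q$ is $\mathcal{C}$-decomposable if there is a function $\tilde c\colon\prod_{j=1}^r\{0,\ldots,n_j\}\to\mathbb{R}$ with $q(A)=\tilde c(|A_1|,\ldots,|A_r|)\prod_{j=1}^r q^{C_j}(A_j)$ for all $A\subseteq C$. For $0\le k\le n$ let $\mathcal{T}_k=\{\mathbf{a}=(a_1,\ldots,a_r)\in\mathbb{N}^r: 0\le a_j\le n_j,\ \sum_j a_j=k\}$. For $\mathbf{a}\in\mathcal{T}_k$, let $E_{k,\mathbf{a}}$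 be the event that, among the first $n-k$ failed components, exactly $n_j-a_j$ lie in $C_j$ for every $j\in[r]$. Equivalently, among the $k$ longest-lived components, exactly $a_j$ lie in $C_j$ for every $j$. *)

theory Defs
  imports "HOL-Probability.Probability"
begin

text \<open>Components are C = {1..n}; lifetimes T :: nat => 'a => real on a probability space M.
  Partition blocks are Cs 0, ..., Cs (r-1). Tuples in prod_j {0..n_j} are lists of length r.\<close>

definition comps :: "nat \<Rightarrow> nat set" where
  "comps n = {1..n}"

text \<open>Relative quality function q(A) = Pr(max_{i in C - A} T_i < min_{i in A} T_i),
  relative to a ground set D (D = C gives q, D = C_j gives q^{C_j}).
  Empty max/min conventions make q(empty) = q(D) = 1.\<close>
definition rel_quality :: "'a measure \<Rightarrow> (nat \<Rightarrow> 'a \<Rightarrow> real) \<Rightarrow> nat set \<Rightarrow> nat set \<Rightarrow> real" where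
  "rel_quality M T D A =
     measure M {\<omega> \<in> space M. \<forall>i\<in>D - A. \<forall>l\<in>A. T i \<omega> < T l \<omega>}"

definition is_partition :: "nat set \<Rightarrow> nat \<Rightarrow> (nat \<Rightarrow> nat set) \<Rightarrow> bool" where
  "is_partition C r Cs \<longleftrightarrow>
     (\<forall>j<r. Cs j \<noteq> {} \<and> Cs j \<subseteq> C) \<and>
     (\<forall>j<r. \<forall>j'<r. j \<noteq> j' \<longrightarrow> Cs j \<inter> Cs j' = {}) \<and>
     (\<Union>j<r. Cs j) = C"

definition block_counts :: "nat \<Rightarrow> (nat \<Rightarrow> nat set) \<Rightarrow> nat set \<Rightarrow> nat list" where
  "block_counts r Cs A = map (\<lambda>j. card (A \<inter> Cs j)) [0..<r]"

definition decomposable ::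
  "'a measure \<Rightarrow> (nat \<Rightarrow> 'a \<Rightarrow> real) \<Rightarrow> nat \<Rightarrow> nat \<Rightarrow> (nat \<Rightarrow> nat set) \<Rightarrow> (nat list \<Rightarrow> real) \<Rightarrow> bool" where
  "decomposable M T n r Cs c \<longleftrightarrow>
     (\<forall>A. A \<subseteq> comps n \<longrightarrow>
        rel_quality M T (comps n) A =
          c (block_counts r Cs A) * (\<Prod>j<r. rel_quality M T (Cs j) (A \<inter> Cs j)))"

definition tuples :: "nat \<Rightarrow> (nat \<Rightarrow> nat set) \<Rightarrow> nat \<Rightarrow> nat list set" where
  "tuples r Cs k = {a. length a = r \<and> (\<forall>j<r. a ! j \<le> card (Cs j)) \<and> sum_list a = k}"

text \<open>E_{k,a}: among the k longest-lived components, exactly a_j lie in C_j.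
  The set B of the k longest-lived components is the k-subset of C all of whose
  members outlive every component outside it.\<close>
definition event_E ::
  "'a measure \<Rightarrow> (nat \<Rightarrow> 'a \<Rightarrow> real) \<Rightarrow> nat \<Rightarrow> nat \<Rightarrow> (nat \<Rightarrow> nat set) \<Rightarrow> nat \<Rightarrow> nat list \<Rightarrow> 'a set" where
  "event_E M T n r Cs k a =
     {\<omega> \<in> space M. \<exists>B. B \<subseteq> comps n \<and> card B = k \<and>
        (\<forall>i\<in>comps n - B. \<forall>l\<in>B. T i \<omega> < T l \<omega>) \<and>
        (\<forall>j<r. card (B \<inter> Cs j) = a ! j)}"

end

theory Submission
  imports Defs
begin

definition G :: "'a measure \<Rightarrow> (nat \<Rightarrow> 'a \<Rightarrow> real) \<Rightarrow> nat set \<Rightarrow> nat set \<Rightarrow> 'a set" where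
  "G M T D A = {\<omega> \<in> space M. \<forall>i\<in>D - A. \<forall>l\<in>A. T i \<omega> < T l \<omega>}"

lemma rq_G: "rel_quality M T D A = measure M (G M T D A)"
  by (simp add: rel_quality_def G_def)

lemma G_sets:
  assumes "finite D" "\<And>i. i \<in> D \<Longrightarrow> T i \<in> borel_measurable M" "A \<subseteq> D"
  shows "G M T D A \<in> sets M"
  unfolding G_def
proof (intro sets.sets_Collect_finite_All)
  fix i l assume "i \<in> D - A" "l \<in> A"
  then have [measurable]: "T i \<in> borel_measurable M" "T l \<in> borel_measurable M" using assms by auto
  show "{x \<in> space M. T i x < T l x} \<in> sets M" by measurable
qed (use assms finite_subset in auto)

lemma G_disj:
  assumes "card A = card A'" "finite D" "A \<subseteq> D" "A' \<subseteq> D" "A \<noteq> A'"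
  shows "G M T D A \<inter> G M T D A' = {}"
proof -
  have fA: "finite A" "finite A'" using assms finite_subset by auto
  have "\<not> A \<subseteq> A'" using card_subset_eq fA assms by metis
  then obtain x where x: "x \<in> A" "x \<notin> A'" by auto
  have "\<not> A' \<subseteq> A" using card_subset_eq fA assms by metis
  then obtain y where y: "y \<in> A'" "y \<notin> A" by auto
  { fix w assume w: "w \<in> G M T D A" "w \<in> G M T D A'"
    have "x \<in> D - A'" "y \<in> A'" using x y assms(3) by auto
    then have "T x w < T y w" using w(2) unfolding G_def by blast
    moreover have "y \<in> D - A" "x \<in> A" using x y assms(4) by auto
    then have "T y w < T x w" using w(1) unfolding G_def by blast
    ultimately have False by simp }
  then show ?thesis by blast
qed

lemma G_exists:
  assumes "finite D" "inj_on (\<lambda>i. T i \<omega>) D" "\<omega> \<in> space M"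
  shows "m \<le> card D \<Longrightarrow> \<exists>A. A \<subseteq> D \<and> card A = m \<and> \<omega> \<in> G M T D A"
proof (induction m)
  case 0
  have "\<omega> \<in> G M T D {}" using assms(3) by (simp add: G_def)
  then show ?case by (intro exI[of _ "{}"]) simp
next
  case (Suc m)
  then have "m \<le> card D" by simp
  then obtain A where A: "A \<subseteq> D" "card A = m" "\<omega> \<in> G M T D A" using Suc.IH by blast
  have "D - A \<noteq> {}"
  proof
    assume "D - A = {}"
    then have "D \<subseteq> A" by auto
    then have "card D \<le> card A" using card_mono[OF finite_subset[OF A(1) assms(1)]] by blast
    then show False using A(2) Suc.prems by simp
  qed
  moreover have "finite (D - A)" using assms by auto
  ultimately have fV: "finite ((\<lambda>i. T i \<omega>) ` (D - A))" and nV: "(\<lambda>i. T i \<omega>) ` (D - A) \<noteq> {}" by auto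
  obtain l where l1: "l \<in> D - A" and l2: "T l \<omega> = Max ((\<lambda>i. T i \<omega>) ` (D - A))"
    using Max_in[OF fV nV] by auto
  have l: "l \<in> D - A" "\<And>i. i \<in> D - A \<Longrightarrow> T i \<omega> \<le> T l \<omega>"
    using l1 apply blast
    unfolding l2 using fV by (intro Max_ge) auto
  have "finite A" using finite_subset[OF A(1) assms(1)] .
  then have "card (insert l A) = Suc m" using A(2) l(1) by simp
  moreover have "\<omega> \<in> G M T D (insert l A)"
  proof -
    { fix i l' assume i: "i \<in> D - insert l A" and l': "l' \<in> insert l A"
      have "T i \<omega> < T l' \<omega>"
      proof (cases "l' = l")
        case True
        have "i \<noteq> l" "i \<in> D" "l \<in> D" using i l(1) by auto
        then have "T i \<omega> \<noteq> T l \<omega>" using assms(2) unfolding inj_on_def by blast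
        moreover have "T i \<omega> \<le> T l \<omega>" using l(2) i by blast
        ultimately show ?thesis using True by simp
      next
        case False
        then have "l' \<in> A" "i \<in> D - A" using l' i by auto
        then show ?thesis using A(3) unfolding G_def by blast
      qed }
    then show ?thesis using assms(3) unfolding G_def by auto
  qed
  moreover have "insert l A \<subseteq> D" using A(1) l(1) by blast
  ultimately show ?case by blast
qed

lemma G_sum:
  assumes "prob_space M" "finite D" "\<And>i. i \<in> D \<Longrightarrow> T i \<in> borel_measurable M"
    "AE \<omega> in M. inj_on (\<lambda>i. T i \<omega>) D" "m \<le> card D"
  shows "(\<Sum>A\<in>{A. A \<subseteq> D \<and> card A = m}. measure M (G M T D A)) = 1"
proof -
  interpret prob_space M by fact
  let ?S = "{A. A \<subseteq> D \<and> card A = m}"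
  have fS: "finite ?S" by (rule finite_subset[of _ "Pow D"]) (use assms(2) in auto)
  have sets: "G M T D A \<in> sets M" if "A \<in> ?S" for A using G_sets[OF assms(2,3)] that by auto
  have U: "(\<Union>A\<in>?S. G M T D A) \<in> sets M" using sets fS by auto
  have "measure M (\<Union>A\<in>?S. G M T D A) = (\<Sum>A\<in>?S. measure M (G M T D A))"
  proof (rule measure_finite_Union[OF fS])
    show "disjoint_family_on (G M T D) ?S" unfolding disjoint_family_on_def
      by (intro ballI impI G_disj[OF _ assms(2)]) auto
  qed (use sets in auto)
  moreover have "AE \<omega> in M. \<omega> \<in> (\<Union>A\<in>?S. G M T D A)"
    using assms(4) AE_space
  proof eventually_elim
    case (elim \<omega>)
    obtain A where "A \<subseteq> D" "card A = m" "\<omega> \<in> G M T D A"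
      using G_exists[of D T \<omega> M m, OF assms(2) elim(1) elim(2) assms(5)] by blast
    then show ?case by blast
  qed
  ultimately show ?thesis using AE_in_set_eq_1[OF U] by simp
qed

lemma union_inter:
  assumes "is_partition C r Cs" "g \<in> PiE {..<r} P" "\<And>j. j < r \<Longrightarrow> P j \<subseteq> Pow (Cs j)" "j < r"
  shows "(\<Union>k<r. g k) \<inter> Cs j = g j"
proof -
  have "\<And>k. k < r \<Longrightarrow> g k \<subseteq> Cs k" using assms(2,3) by (auto simp: PiE_def Pi_def)
  moreover have "\<And>k. k < r \<Longrightarrow> k \<noteq> j \<Longrightarrow> Cs k \<inter> Cs j = {}" using assms(1,4) by (auto simp: is_partition_def)
  ultimately show ?thesis using assms(4) by blast
qed

lemma prod_decomp:
  fixes f :: "nat \<Rightarrow> nat set \<Rightarrow> real"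
  assumes "is_partition C r Cs" "finite C"
  shows "(\<Sum>A\<in>{A. A \<subseteq> C \<and> (\<forall>j<r. card (A \<inter> Cs j) = a!j)}. \<Prod>j<r. f j (A \<inter> Cs j))
       = (\<Prod>j<r. \<Sum>B\<in>{B. B \<subseteq> Cs j \<and> card B = a!j}. f j B)"
proof -
  let ?P = "\<lambda>j. {B. B \<subseteq> Cs j \<and> card B = a!j}"
  have sub: "Cs j \<subseteq> C" if "j < r" for j using assms that by (auto simp: is_partition_def)
  have fin: "finite (?P j)" if "j < r" for j
    by (rule finite_subset[of _ "Pow (Cs j)"]) (use finite_subset[OF sub[OF that] assms(2)] in auto)
  have "(\<Prod>j<r. \<Sum>B\<in>?P j. f j B) = (\<Sum>g\<in>PiE {..<r} ?P. \<Prod>j<r. f j (g j))"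
    by (rule prod_sum_PiE) (use fin in auto)
  also have "\<dots> = (\<Sum>A\<in>{A. A \<subseteq> C \<and> (\<forall>j<r. card (A \<inter> Cs j) = a!j)}. \<Prod>j<r. f j (A \<inter> Cs j))"
  proof (rule sum.reindex_bij_witness[where j = "\<lambda>g. \<Union>k<r. g k" and i = "\<lambda>A. restrict (\<lambda>j. A \<inter> Cs j) {..<r}"])
    have PP: "\<And>j. j < r \<Longrightarrow> ?P j \<subseteq> Pow (Cs j)" by auto
    fix g assume g: "g \<in> PiE {..<r} ?P"
    note ui = union_inter[OF assms(1) g PP]
    show "restrict (\<lambda>j. (\<Union>k<r. g k) \<inter> Cs j) {..<r} = g"
      using g ui by (auto simp: PiE_def extensional_def fun_eq_iff)
    show "(\<Union>k<r. g k) \<in> {A. A \<subseteq> C \<and> (\<forall>j<r. card (A \<inter> Cs j) = a!j)}"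
    proof -
      have "\<And>k. k < r \<Longrightarrow> g k \<subseteq> Cs k" "\<And>k. k < r \<Longrightarrow> card (g k) = a!k" using g by auto
      moreover have "(\<Union>k<r. g k) \<subseteq> C" using calculation(1) sub by blast
      ultimately show ?thesis using ui by auto
    qed
    show "(\<Prod>j<r. f j ((\<Union>k<r. g k) \<inter> Cs j)) = (\<Prod>j<r. f j (g j))"
      using ui by (auto intro: prod.cong)
  next
    fix A assume A: "A \<in> {A. A \<subseteq> C \<and> (\<forall>j<r. card (A \<inter> Cs j) = a!j)}"
    show "(\<Union>k<r. restrict (\<lambda>j. A \<inter> Cs j) {..<r} k) = A"
      using A assms(1) by (auto simp: is_partition_def)
    show "restrict (\<lambda>j. A \<inter> Cs j) {..<r} \<in> PiE {..<r} ?P" using A by auto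
  qed
  finally show ?thesis by simp
qed


theorem proposition5:
  fixes M :: "'a measure" and T :: "nat \<Rightarrow> 'a \<Rightarrow> real"
    and n r :: nat and Cs :: "nat \<Rightarrow> nat set" and c :: "nat list \<Rightarrow> real"
  assumes "prob_space M"
    and "\<And>i. i \<in> comps n \<Longrightarrow> T i \<in> borel_measurable M"
    and "AE \<omega> in M. inj_on (\<lambda>i. T i \<omega>) (comps n)"
    and "is_partition (comps n) r Cs"
    and "decomposable M T n r Cs c"
    and "k \<le> n"
  shows "(\<forall>a\<in>tuples r Cs k. c a = measure M (event_E M T n r Cs k a))
         \<and> (\<forall>a\<in>tuples r Cs k. c a \<ge> 0) \<and> (\<Sum>a\<in>tuples r Cs k. c a) = 1"
proof -
  interpret P: prob_space M by fact
  let ?C = "comps n"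
  have finC: "finite ?C" and cardC: "card ?C = n" by (simp_all add: comps_def)
  note part = assms(4)
  have sub: "Cs j \<subseteq> ?C" if "j<r" for j using part that by (auto simp: is_partition_def)
  have finCs: "finite (Cs j)" if "j<r" for j using finite_subset[OF sub[OF that] finC] .
  have disj: "\<forall>j<r. \<forall>j'<r. j \<noteq> j' \<longrightarrow> Cs j \<inter> Cs j' = {}" using part by (simp add: is_partition_def)
  have unionC: "(\<Union>j<r. Cs j) = ?C" using part by (simp add: is_partition_def)
  have cardA: "card A = (\<Sum>j<r. card (A \<inter> Cs j))" if "A \<subseteq> ?C" for A
  proof -
    have "A = (\<Union>j<r. A \<inter> Cs j)" using that unionC by blast
    also have "card \<dots> = (\<Sum>j<r. card (A \<inter> Cs j))"
      by (rule card_UN_disjoint) (use finCs disj in auto)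
    finally show ?thesis .
  qed
  have bc: "block_counts r Cs A = a \<longleftrightarrow> (\<forall>j<r. card (A \<inter> Cs j) = a!j)" if "length a = r" for A a
    using that unfolding block_counts_def by (auto simp: list_eq_iff_nth_eq)
  have suml: "sum_list a = (\<Sum>j<r. a!j)" if "length a = r" for a :: "nat list"
    using that by (simp add: sum_list_sum_nth atLeast0LessThan)
  let ?Sk = "{A. A \<subseteq> ?C \<and> card A = k}"
  define S where "S a = {A \<in> ?Sk. block_counts r Cs A = a}" for a
  have S_alt: "S a = {A. A \<subseteq> ?C \<and> (\<forall>j<r. card (A \<inter> Cs j) = a!j)}" if "a \<in> tuples r Cs k" for a
  proof -
    have la: "length a = r" "sum_list a = k" using that by (auto simp: tuples_def)
    { fix A assume A: "A \<subseteq> ?C" "\<forall>j<r. card (A \<inter> Cs j) = a!j"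
      have "card A = k" using cardA[OF A(1)] A(2) suml[OF la(1)] la(2) by simp }
    then show ?thesis unfolding S_def using bc[OF la(1)] by auto
  qed
  have E_eq: "event_E M T n r Cs k a = (\<Union>A\<in>S a. G M T ?C A)" if "a \<in> tuples r Cs k" for a
    using bc[of a] that unfolding event_E_def S_def G_def tuples_def by auto
  have finSk: "finite ?Sk" by (rule finite_subset[of _ "Pow ?C"]) (use finC in auto)
  have finS: "finite (S a)" for a by (rule finite_subset[OF _ finSk]) (auto simp: S_def)
  have Gsets: "G M T ?C A \<in> sets M" if "A \<subseteq> ?C" for A using G_sets[OF finC assms(2) that] .
  have measE: "measure M (event_E M T n r Cs k a) = (\<Sum>A\<in>S a. rel_quality M T ?C A)"
    if "a \<in> tuples r Cs k" for a
  proof -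
    have "measure M (\<Union>A\<in>S a. G M T ?C A) = (\<Sum>A\<in>S a. measure M (G M T ?C A))"
    proof (rule measure_finite_Union[OF finS])
      show "disjoint_family_on (G M T ?C) (S a)" unfolding disjoint_family_on_def
        by (intro ballI impI G_disj[OF _ finC]) (auto simp: S_def)
    qed (use Gsets in \<open>auto simp: S_def P.emeasure_finite\<close>)
    then show ?thesis using E_eq[OF that] by (simp add: rq_G)
  qed
  have inner: "(\<Sum>B\<in>{B. B \<subseteq> Cs j \<and> card B = a!j}. rel_quality M T (Cs j) B) = 1"
    if a: "a \<in> tuples r Cs k" and j: "j < r" for a j
    unfolding rq_G
  proof (rule G_sum[OF assms(1) finCs[OF j]])
    show "T i \<in> borel_measurable M" if "i \<in> Cs j" for i using assms(2) sub[OF j] that by blast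
    show "AE \<omega> in M. inj_on (\<lambda>i. T i \<omega>) (Cs j)"
      using assms(3) by (rule eventually_mono) (rule inj_on_subset[OF _ sub[OF j]])
    show "a ! j \<le> card (Cs j)" using a j by (simp add: tuples_def)
  qed
  have ceq: "c a = measure M (event_E M T n r Cs k a)" if a: "a \<in> tuples r Cs k" for a
  proof -
    have "measure M (event_E M T n r Cs k a) = (\<Sum>A\<in>S a. rel_quality M T ?C A)" by (rule measE[OF a])
    also have "\<dots> = (\<Sum>A\<in>S a. c a * (\<Prod>j<r. rel_quality M T (Cs j) (A \<inter> Cs j)))"
      by (rule sum.cong[OF refl]) (use assms(5) in \<open>auto simp: decomposable_def S_def\<close>)
    also have "\<dots> = c a * (\<Sum>A\<in>S a. \<Prod>j<r. rel_quality M T (Cs j) (A \<inter> Cs j))"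
      by (simp add: sum_distrib_left)
    also have "(\<Sum>A\<in>S a. \<Prod>j<r. rel_quality M T (Cs j) (A \<inter> Cs j))
        = (\<Prod>j<r. \<Sum>B\<in>{B. B \<subseteq> Cs j \<and> card B = a!j}. rel_quality M T (Cs j) B)"
      unfolding S_alt[OF a] by (rule prod_decomp[OF part finC])
    also have "\<dots> = 1" using inner[OF a] by simp
    finally show ?thesis by simp
  qed
  have fT: "finite (tuples r Cs k)"
  proof (rule finite_subset[OF _ finite_lists_length_eq[of "{0..k}" r]])
    show "tuples r Cs k \<subseteq> {xs. set xs \<subseteq> {0..k} \<and> length xs = r}"
    proof
      fix a assume "a \<in> tuples r Cs k"
      then have "length a = r" "sum_list a = k" by (auto simp: tuples_def)
      then show "a \<in> {xs. set xs \<subseteq> {0..k} \<and> length xs = r}"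
        using member_le_sum_list[of _ a] by fastforce
    qed
  qed simp
  have img: "block_counts r Cs ` ?Sk \<subseteq> tuples r Cs k"
  proof
    fix b assume "b \<in> block_counts r Cs ` ?Sk"
    then obtain A where A: "A \<subseteq> ?C" "card A = k" and b: "b = block_counts r Cs A" by auto
    have "length b = r" using b by (simp add: block_counts_def)
    moreover have "\<forall>j<r. b ! j \<le> card (Cs j)"
      using b finCs by (auto simp: block_counts_def intro: card_mono)
    moreover have "sum_list b = k"
      using suml[OF \<open>length b = r\<close>] b cardA[OF A(1)] A(2) by (simp add: block_counts_def)
    ultimately show "b \<in> tuples r Cs k" by (simp add: tuples_def)
  qed
  have kC: "k \<le> card ?C" using assms(6) cardC by simp
  have sum1: "(\<Sum>a\<in>tuples r Cs k. c a) = 1"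
  proof -
    have "(\<Sum>a\<in>tuples r Cs k. c a) = (\<Sum>a\<in>tuples r Cs k. \<Sum>A\<in>S a. rel_quality M T ?C A)"
      using ceq measE by (intro sum.cong) auto
    also have "\<dots> = (\<Sum>A\<in>?Sk. rel_quality M T ?C A)"
      unfolding S_def by (rule sum.group[OF finSk fT img])
    also have "\<dots> = 1" unfolding rq_G
      by (rule G_sum[OF assms(1) finC assms(2) assms(3) kC])
    finally show ?thesis .
  qed
  show ?thesis using ceq sum1 by simp
qed

end
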